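(* The proportional-cumulative is the unique Level-SP PAF $\psi:\mathcal P^N\to\mathcal P$ satisfying proportionality, where the proportional-cumulative is the PAF whose associated CAF is $$\Psi(\mathbf P)(a)=\operatorname{median}\Big(P_1(a),\dots,P_n(a),\tfrac1n,\tfrac2n,\dots,\tfrac{n-1}n\Big)\quad(a\in\Lambda,\ \mathbf P\in\mathcal C^N).$$
   Context: Let $N=\{1,\dots,n\}$, $\Lambda\subseteq\mathbb R$ a nonempty Borel set, $\mathcal P$ the Borel probability measures on $\Lambda$, $\mathcal C$ the CDFs on $\Lambda$, $\pi(p)(a)=p(\{x\in\Lambda:x\le a\})$. A PAF is a map $\psi:\mathcal P^N\to\mathcal P$ with associated CAF $\Psi$ given by $\Psi(\pi(p_1),\dots,\pi(p_n))=\pi(\psi(p_1,\dots,p_n))$; $P_i=\pi(p_i)$. $\mathbf z_{-i}(z_i')$ is $\mathbf z$ with $i$-th coordinate replaced by $z_i'$. $\psi$ is Level-SP if for every $i$, $\mathbf P$, $P_i'$, $a$: $P_i(a)<\Psi(\mathbf P)(a)\Rightarrow\Psi(\mathbf P)(a)\le\Psi(\mathbf P_{-i}(P_i'))(a)$ and $P_i(a)>\Psi(\mathbf P)(a)\Rightarrow\Psi(\mathbf P)(a)\ge\Psi(\mathbf P_{-i}(P_i'))(a)$. $\psi$ satisfies proportionality if $\psi(\delta_{a_1},\dots,\delta_{a_n})=\frac1n\sum_{i\in N}\delta_{a_i}$ for all $(a_1,\dots,a_n)\in\Lambda^N$, where $\delta_a$ is the Dirac mass at $a$. The median of $2n-1$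 numbers is the $n$-th smallest. *)

theory Defs
  imports "HOL-Probability.Probability"
begin

definition LamSp :: "real set \<Rightarrow> real measure" where
  "LamSp L = restrict_space borel L"

definition Pset :: "real set \<Rightarrow> real measure set" where
  "Pset L = {M. sets M = sets (LamSp L) \<and> prob_space M}"

definition profiles :: "nat \<Rightarrow> real set \<Rightarrow> (nat \<Rightarrow> real measure) set" where
  "profiles n L = PiE {1..n} (\<lambda>_. Pset L)"

definition cdfL :: "real set \<Rightarrow> real measure \<Rightarrow> real \<Rightarrow> real" where
  "cdfL L p a = measure p {x \<in> L. x \<le> a}"

definition is_PAF :: "nat \<Rightarrow> real set \<Rightarrow> ((nat \<Rightarrow> real measure) \<Rightarrow> real measure) \<Rightarrow> bool" where
  "is_PAF n L \<psi> \<longleftrightarrow> (\<forall>p \<in> profiles n L. \<psi> p \<in> Pset L)"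

definition level_SP :: "nat \<Rightarrow> real set \<Rightarrow> ((nat \<Rightarrow> real measure) \<Rightarrow> real measure) \<Rightarrow> bool" where
  "level_SP n L \<psi> \<longleftrightarrow>
     (\<forall>i \<in> {1..n}. \<forall>p \<in> profiles n L. \<forall>q \<in> Pset L. \<forall>a \<in> L.
        (cdfL L (p i) a < cdfL L (\<psi> p) a \<longrightarrow> cdfL L (\<psi> p) a \<le> cdfL L (\<psi> (p(i := q))) a) \<and>
        (cdfL L (p i) a > cdfL L (\<psi> p) a \<longrightarrow> cdfL L (\<psi> p) a \<ge> cdfL L (\<psi> (p(i := q))) a))"

text \<open>Proportionality: psi(delta_{a_1},...,delta_{a_n}) = (1/n) sum_i delta_{a_i}
  (stated by evaluating both measures on every Borel subset of Lambda).\<close>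
definition proportional :: "nat \<Rightarrow> real set \<Rightarrow> ((nat \<Rightarrow> real measure) \<Rightarrow> real measure) \<Rightarrow> bool" where
  "proportional n L \<psi> \<longleftrightarrow>
     (\<forall>a. (\<forall>i \<in> {1..n}. a i \<in> L) \<longrightarrow>
        (\<forall>A \<in> sets (LamSp L).
           measure (\<psi> (\<lambda>i\<in>{1..n}. return (LamSp L) (a i))) A
             = real (card {i \<in> {1..n}. a i \<in> A}) / real n))"

text \<open>Median of the 2n-1 numbers P_1(a),...,P_n(a), 1/n,...,(n-1)/n: the n-th smallest.\<close>
definition pc_median :: "nat \<Rightarrow> (nat \<Rightarrow> real) \<Rightarrow> real" where
  "pc_median n v = sort (map v [1..<n+1] @ map (\<lambda>k. real k / real n) [1..<n]) ! (n - 1)"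

definition is_prop_cumulative :: "nat \<Rightarrow> real set \<Rightarrow> ((nat \<Rightarrow> real measure) \<Rightarrow> real measure) \<Rightarrow> bool" where
  "is_prop_cumulative n L \<psi> \<longleftrightarrow>
     (\<forall>p \<in> profiles n L. \<forall>a \<in> L. cdfL L (\<psi> p) a = pc_median n (\<lambda>i. cdfL L (p i) a))"

end

theory Submission
  imports Defs
begin


lemma length_filter_sort: "length (filter P (sort xs)) = length (filter P xs)"
proof -
  have "mset (filter P (sort xs)) = mset (filter P xs)" by (simp add: mset_filter)
  then show ?thesis by (metis size_mset)
qed

lemma sort_nth_le_iff:
  fixes xs :: "real list" assumes k: "k < length xs"
  shows "sort xs ! k \<le> s \<longleftrightarrow> Suc k \<le> length (filter (\<lambda>x. x \<le> s) xs)"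
proof -
  let ?zs = "sort xs"
  have srt: "sorted ?zs" by simp
  have len: "length ?zs = length xs" by simp
  have eq: "length (filter (\<lambda>x. x \<le> s) xs) = card {i. i < length ?zs \<and> ?zs!i \<le> s}"
    by (subst length_filter_sort[symmetric]) (rule length_filter_conv_card)
  show ?thesis
  proof
    assume h: "?zs ! k \<le> s"
    have "{0..k} \<subseteq> {i. i < length ?zs \<and> ?zs!i \<le> s}"
    proof
      fix i assume "i \<in> {0..k}"
      hence "i \<le> k" by simp
      hence "?zs!i \<le> ?zs!k" using sorted_nth_mono[OF srt, of i k] k len by simp
      thus "i \<in> {i. i < length ?zs \<and> ?zs!i \<le> s}" using h \<open>i \<le> k\<close> k len by simp
    qed
    from card_mono[OF _ this] eq show "Suc k \<le> length (filter (\<lambda>x. x \<le> s) xs)" by simp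
  next
    assume h: "Suc k \<le> length (filter (\<lambda>x. x \<le> s) xs)"
    show "?zs ! k \<le> s"
    proof (rule ccontr)
      assume "\<not> ?zs ! k \<le> s"
      hence "{i. i < length ?zs \<and> ?zs!i \<le> s} \<subseteq> {..<k}"
      proof (intro subsetI)
        fix i assume a: "\<not> ?zs ! k \<le> s" and "i \<in> {i. i < length ?zs \<and> ?zs!i \<le> s}"
        hence i: "i < length ?zs" "?zs!i \<le> s" by auto
        show "i \<in> {..<k}"
        proof (rule ccontr)
          assume "i \<notin> {..<k}" hence "k \<le> i" by simp
          hence "?zs!k \<le> ?zs!i" using sorted_nth_mono[OF srt, of k i] i by simp
          thus False using a i by simp
        qed
      qed
      from card_mono[OF _ this] eq h show False by simp
    qed
  qed
qed

lemma sort_nth_less_iff: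
  fixes xs :: "real list" assumes k: "k < length xs"
  shows "sort xs ! k < s \<longleftrightarrow> Suc k \<le> length (filter (\<lambda>x. x < s) xs)"
proof -
  let ?zs = "sort xs"
  have srt: "sorted ?zs" by simp
  have len: "length ?zs = length xs" by simp
  have eq: "length (filter (\<lambda>x. x < s) xs) = card {i. i < length ?zs \<and> ?zs!i < s}"
    by (subst length_filter_sort[symmetric]) (rule length_filter_conv_card)
  show ?thesis
  proof
    assume h: "?zs ! k < s"
    have "{0..k} \<subseteq> {i. i < length ?zs \<and> ?zs!i < s}"
    proof
      fix i assume "i \<in> {0..k}"
      hence "i \<le> k" by simp
      hence "?zs!i \<le> ?zs!k" using sorted_nth_mono[OF srt, of i k] k len by simp
      thus "i \<in> {i. i < length ?zs \<and> ?zs!i < s}" using h \<open>i \<le> k\<close> k len by simp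
    qed
    from card_mono[OF _ this] eq show "Suc k \<le> length (filter (\<lambda>x. x < s) xs)" by simp
  next
    assume h: "Suc k \<le> length (filter (\<lambda>x. x < s) xs)"
    show "?zs ! k < s"
    proof (rule ccontr)
      assume "\<not> ?zs ! k < s"
      hence "{i. i < length ?zs \<and> ?zs!i < s} \<subseteq> {..<k}"
      proof (intro subsetI)
        fix i assume a: "\<not> ?zs ! k < s" and "i \<in> {i. i < length ?zs \<and> ?zs!i < s}"
        hence i: "i < length ?zs" "?zs!i < s" by auto
        show "i \<in> {..<k}"
        proof (rule ccontr)
          assume "i \<notin> {..<k}" hence "k \<le> i" by simp
          hence "?zs!k \<le> ?zs!i" using sorted_nth_mono[OF srt, of k i] i by simp
          thus False using a i by simp
        qed
      qed
      from card_mono[OF _ this] eq h show False by simp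
    qed
  qed
qed

definition cnt :: "nat \<Rightarrow> (nat \<Rightarrow> real) \<Rightarrow> (real \<Rightarrow> bool) \<Rightarrow> nat" where
  "cnt n v P = card {i \<in> {1..n}. P (v i)}"

definition ph :: "nat \<Rightarrow> nat \<Rightarrow> real" where "ph n j = real j / real n"

lemma length_filter_LL:
  "length (filter P (map v [1..<n+1] @ map (\<lambda>k. real k / real n) [1..<n]))
     = cnt n v P + cnt (n-1) (ph n) P"
proof -
  have a: "length (filter P (map v [1..<n+1])) = cnt n v P"
    unfolding cnt_def length_filter_map
    by (subst distinct_length_filter) (auto intro!: arg_cong[where f=card])
  have b: "length (filter P (map (\<lambda>k. real k / real n) [1..<n])) = cnt (n-1) (ph n) P"
    unfolding cnt_def length_filter_map ph_def
    by (subst distinct_length_filter) (auto intro!: arg_cong[where f=card])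
  show ?thesis using a b by simp
qed

lemma LL_len: "n \<ge> 1 \<Longrightarrow> n - 1 < length (map v [1..<n+1] @ map (\<lambda>k. real k / real n) [1..<n])"
  by simp

lemma med_le_iff: assumes "n \<ge> 1"
  shows "pc_median n v \<le> s \<longleftrightarrow> n \<le> cnt n v (\<lambda>x. x \<le> s) + cnt (n-1) (ph n) (\<lambda>x. x \<le> s)"
proof -
  have "pc_median n v \<le> s \<longleftrightarrow> Suc (n-1) \<le> cnt n v (\<lambda>x. x \<le> s) + cnt (n-1) (ph n) (\<lambda>x. x \<le> s)"
    unfolding pc_median_def sort_nth_le_iff[OF LL_len[OF assms]] length_filter_LL ..
  then show ?thesis using assms by simp
qed

lemma med_less_iff: assumes "n \<ge> 1"
  shows "pc_median n v < s \<longleftrightarrow> n \<le> cnt n v (\<lambda>x. x < s) + cnt (n-1) (ph n) (\<lambda>x. x < s)"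
proof -
  have "pc_median n v < s \<longleftrightarrow> Suc (n-1) \<le> cnt n v (\<lambda>x. x < s) + cnt (n-1) (ph n) (\<lambda>x. x < s)"
    unfolding pc_median_def sort_nth_less_iff[OF LL_len[OF assms]] length_filter_LL ..
  then show ?thesis using assms by simp
qed



lemma cnt_mono: "(\<And>i. i \<in> {1..n} \<Longrightarrow> P (v i) \<Longrightarrow> Q (w i)) \<Longrightarrow> cnt n v P \<le> cnt n w Q"
  unfolding cnt_def by (rule card_mono) auto

lemma cnt_compl: "cnt n v P + cnt n v (\<lambda>x. \<not> P x) = n"
proof -
  have "{i \<in> {1..n}. P (v i)} \<union> {i \<in> {1..n}. \<not> P (v i)} = {1..n}" by auto
  moreover have "{i \<in> {1..n}. P (v i)} \<inter> {i \<in> {1..n}. \<not> P (v i)} = {}" by auto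
  moreover have "card ({i \<in> {1..n}. P (v i)} \<union> {i \<in> {1..n}. \<not> P (v i)}) = card {i \<in> {1..n}. P (v i)} + card {i \<in> {1..n}. \<not> P (v i)}"
    by (rule card_Un_disjoint) (auto)
  ultimately show ?thesis unfolding cnt_def by simp
qed

lemma cnt_le: "cnt n v P \<le> n"
proof -
  have "{i \<in> {1..n}. P (v i)} \<subseteq> {1..n}" by auto
  from card_mono[OF _ this] show ?thesis unfolding cnt_def by simp
qed

lemma med_shift:
  assumes n: "n \<ge> 1" and d: "d \<ge> 0" and vw: "\<And>i. i \<in> {1..n} \<Longrightarrow> v i \<le> w i + d"
  shows "pc_median n v \<le> pc_median n w + d"
proof -
  let ?s = "pc_median n w"
  have "n \<le> cnt n w (\<lambda>x. x \<le> ?s) + cnt (n-1) (ph n) (\<lambda>x. x \<le> ?s)"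
    using med_le_iff[OF n, of w ?s] by simp
  moreover have "cnt n w (\<lambda>x. x \<le> ?s) \<le> cnt n v (\<lambda>x. x \<le> ?s + d)"
    by (rule cnt_mono) (use vw in force)
  moreover have "cnt (n-1) (ph n) (\<lambda>x. x \<le> ?s) \<le> cnt (n-1) (ph n) (\<lambda>x. x \<le> ?s + d)"
    by (rule cnt_mono) (use d in force)
  ultimately show ?thesis using med_le_iff[OF n, of v "?s + d"] by linarith
qed

lemma med_mono:
  assumes n: "n \<ge> 1" and vw: "\<And>i. i \<in> {1..n} \<Longrightarrow> v i \<le> w i"
  shows "pc_median n v \<le> pc_median n w"
  using med_shift[OF n, of 0 v w] vw by simp

lemma med_SP_low:
  assumes n: "n \<ge> 1" and i: "i \<in> {1..n}" and lt: "v i < pc_median n v"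
  shows "pc_median n v \<le> pc_median n (v(i := t))"
proof (rule ccontr)
  let ?m = "pc_median n v" and ?m' = "pc_median n (v(i := t))"
  assume "\<not> ?m \<le> ?m'"
  define s where "s = max ?m' (v i)"
  have sm: "s < ?m" using \<open>\<not> ?m \<le> ?m'\<close> lt unfolding s_def by simp
  have "?m' \<le> s" unfolding s_def by simp
  hence "n \<le> cnt n (v(i := t)) (\<lambda>x. x \<le> s) + cnt (n-1) (ph n) (\<lambda>x. x \<le> s)"
    using med_le_iff[OF n] by blast
  moreover have "cnt n (v(i := t)) (\<lambda>x. x \<le> s) \<le> cnt n v (\<lambda>x. x \<le> s)"
    by (rule cnt_mono) (auto simp: s_def split: if_splits)
  ultimately have "?m \<le> s" using med_le_iff[OF n, of v s] by linarith
  thus False using sm by simp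
qed

lemma med_SP_high:
  assumes n: "n \<ge> 1" and i: "i \<in> {1..n}" and gt: "v i > pc_median n v"
  shows "pc_median n v \<ge> pc_median n (v(i := t))"
proof (rule ccontr)
  let ?m = "pc_median n v" and ?m' = "pc_median n (v(i := t))"
  assume "\<not> ?m \<ge> ?m'"
  define s where "s = min ?m' (v i)"
  have sm: "s > ?m" using \<open>\<not> ?m \<ge> ?m'\<close> gt unfolding s_def by simp
  have "\<not> ?m' < s" unfolding s_def by simp
  hence "\<not> n \<le> cnt n (v(i := t)) (\<lambda>x. x < s) + cnt (n-1) (ph n) (\<lambda>x. x < s)"
    using med_less_iff[OF n] by blast
  moreover have "cnt n v (\<lambda>x. x < s) \<le> cnt n (v(i := t)) (\<lambda>x. x < s)"
    by (rule cnt_mono) (auto simp: s_def split: if_splits)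
  ultimately have "\<not> ?m < s" using med_less_iff[OF n, of v s] by linarith
  thus False using sm by simp
qed

lemma med_nonneg:
  assumes n: "n \<ge> 1" and v: "\<And>i. i \<in> {1..n} \<Longrightarrow> 0 \<le> v i"
  shows "0 \<le> pc_median n v"
proof -
  have "cnt n v (\<lambda>x. x < 0) = 0" unfolding cnt_def using v by (auto simp: not_less)
  moreover have "cnt (n-1) (ph n) (\<lambda>x. x < 0) = 0" unfolding cnt_def ph_def by (auto simp: not_less)
  ultimately show ?thesis using med_less_iff[OF n, of v 0] n by simp
qed

lemma med_le1:
  assumes n: "n \<ge> 1" and v: "\<And>i. i \<in> {1..n} \<Longrightarrow> v i \<le> 1"
  shows "pc_median n v \<le> 1"
proof -
  have "{i \<in> {1..n}. v i \<le> 1} = {1..n}" using v by auto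
  hence "cnt n v (\<lambda>x. x \<le> 1) = n" unfolding cnt_def by simp
  thus ?thesis using med_le_iff[OF n, of v 1] by simp
qed

lemma med_upper:
  assumes n: "n \<ge> 1" and A: "A = cnt n v (\<lambda>x. y < x)" and An: "A < n" and Ay: "real A / real n \<le> y"
  shows "pc_median n v \<le> y"
proof -
  have c1: "cnt n v (\<lambda>x. x \<le> y) = n - A"
    using cnt_compl[of n v "\<lambda>x. x \<le> y"] A by (simp add: not_le)
  have "{1..A} \<subseteq> {j \<in> {1..n-1}. ph n j \<le> y}"
  proof
    fix j assume "j \<in> {1..A}"
    hence j: "1 \<le> j" "j \<le> A" by auto
    have "real j / real n \<le> real A / real n" using j n by (simp add: divide_right_mono)
    thus "j \<in> {j \<in> {1..n-1}. ph n j \<le> y}" using j An Ay by (auto simp: ph_def)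
  qed
  from card_mono[OF _ this] have "A \<le> cnt (n-1) (ph n) (\<lambda>x. x \<le> y)" unfolding cnt_def
    by simp
  thus ?thesis using med_le_iff[OF n, of v y] c1 An by linarith
qed

lemma med_lower:
  assumes n: "n \<ge> 1" and A: "A = cnt n v (\<lambda>x. y \<le> x)" and A1: "1 \<le> A" and Ay: "y \<le> real A / real n"
  shows "y \<le> pc_median n v"
proof -
  have An: "A \<le> n" using A cnt_le by simp
  have c1: "cnt n v (\<lambda>x. x < y) = n - A"
    using cnt_compl[of n v "\<lambda>x. y \<le> x"] A by (simp add: not_le)
  have "{j \<in> {1..n-1}. ph n j < y} \<subseteq> {1..A-1}"
  proof
    fix j assume "j \<in> {j \<in> {1..n-1}. ph n j < y}"
    hence j: "1 \<le> j" "real j / real n < y" by (auto simp: ph_def)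
    hence "real j / real n < real A / real n" using Ay by simp
    hence "j < A" using n by (simp add: divide_less_cancel)
    thus "j \<in> {1..A-1}" using j by auto
  qed
  from card_mono[OF _ this] have "cnt (n-1) (ph n) (\<lambda>x. x < y) \<le> A - 1" unfolding cnt_def
    by simp
  hence "\<not> pc_median n v < y" using med_less_iff[OF n, of v y] c1 A1 An by linarith
  thus ?thesis by simp
qed

lemma med_01:
  assumes n: "n \<ge> 1" and v: "\<And>i. i \<in> {1..n} \<Longrightarrow> v i = 0 \<or> v i = 1"
  shows "pc_median n v = real (cnt n v (\<lambda>x. x = 1)) / real n"
proof -
  let ?k = "cnt n v (\<lambda>x. x = 1)"
  have kn: "?k \<le> n" by (rule cnt_le)
  show ?thesis
  proof (rule antisym)
    show "pc_median n v \<le> real ?k / real n"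
    proof (cases "?k < n")
      case True
      have seteq: "{i \<in> {1..n}. real ?k / real n < v i} = {i \<in> {1..n}. v i = 1}"
      proof (intro Collect_cong conj_cong refl)
        fix i assume "i \<in> {1..n}"
        have z: "0 \<le> real ?k / real n" by simp
        have o: "real ?k / real n < 1" using True n by simp
        have "v i = 0 \<or> v i = 1" using v \<open>i \<in> {1..n}\<close> by blast
        then show "(real ?k / real n < v i) = (v i = 1)"
        proof (elim disjE)
          assume "v i = 0" thus ?thesis using z by (simp add: not_less)
        next
          assume "v i = 1" thus ?thesis using o by simp
        qed
      qed
      have "cnt n v (\<lambda>x. real ?k / real n < x) = ?k"
        by (simp only: cnt_def[of n v "\<lambda>x. real ?k / real n < x"] seteq) (simp add: cnt_def)
      thus ?thesis using med_upper[OF n, of ?k v] True by simp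
    next
      case False
      hence "?k = n" using kn by simp
      thus ?thesis using med_le1[OF n, of v] v n by force
    qed
  next
    show "real ?k / real n \<le> pc_median n v"
    proof (cases "?k \<ge> 1")
      case True
      have seteq: "{i \<in> {1..n}. real ?k / real n \<le> v i} = {i \<in> {1..n}. v i = 1}"
      proof (intro Collect_cong conj_cong refl)
        fix i assume "i \<in> {1..n}"
        have p: "0 < real ?k / real n" using True n by simp
        have o: "real ?k / real n \<le> 1" using kn n by simp
        have "v i = 0 \<or> v i = 1" using v \<open>i \<in> {1..n}\<close> by blast
        then show "(real ?k / real n \<le> v i) = (v i = 1)"
        proof (elim disjE)
          assume "v i = 0" thus ?thesis using p by (simp add: not_le)
        next
          assume "v i = 1" thus ?thesis using o by simp
        qed
      qed
      have "cnt n v (\<lambda>x. real ?k / real n \<le> x) = ?k"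
        by (simp only: cnt_def[of n v "\<lambda>x. real ?k / real n \<le> x"] seteq) (simp add: cnt_def)
      thus ?thesis using med_lower[OF n, of ?k v] True by simp
    next
      case False
      hence "?k = 0" by simp
      thus ?thesis using med_nonneg[OF n, of v] v by force
    qed
  qed
qed



lemma space_LamSp[simp]: "space (LamSp L) = L"
  unfolding LamSp_def by (simp add: space_restrict_space)

lemma Iic_in_LamSp: "L \<in> sets borel \<Longrightarrow> {x \<in> L. x \<le> a} \<in> sets (LamSp L)"
  unfolding LamSp_def by (subst sets_restrict_space_iff) auto

lemma Pset_D: assumes "q \<in> Pset L" shows "sets q = sets (LamSp L)" "prob_space q" "space q = L"
  using assms unfolding Pset_def by (auto dest: sets_eq_imp_space_eq)

lemma cdfL_nonneg: "0 \<le> cdfL L q a" unfolding cdfL_def by simp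

lemma cdfL_le1: "q \<in> Pset L \<Longrightarrow> cdfL L q a \<le> 1"
  unfolding cdfL_def using Pset_D[of q L] prob_space.prob_le_1 by blast

lemma cdfL_top: assumes "q \<in> Pset L" "\<And>c. c \<in> L \<Longrightarrow> c \<le> a" shows "cdfL L q a = 1"
proof -
  have "{x \<in> L. x \<le> a} = space q" using Pset_D[OF assms(1)] assms(2) by auto
  thus ?thesis unfolding cdfL_def using Pset_D(2)[OF assms(1)] prob_space.prob_space by metis
qed

lemma return_Pset: "b \<in> L \<Longrightarrow> return (LamSp L) b \<in> Pset L"
  unfolding Pset_def by (auto intro!: prob_space_return)

lemma cdfL_return: assumes "L \<in> sets borel" "b \<in> L"
  shows "cdfL L (return (LamSp L) b) a = (if b \<le> a then 1 else 0)"
  unfolding cdfL_def using assms by (subst measure_return) (auto simp: Iic_in_LamSp)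

lemma profiles_upd: "p \<in> profiles n L \<Longrightarrow> i \<in> {1..n} \<Longrightarrow> q \<in> Pset L \<Longrightarrow> p(i := q) \<in> profiles n L"
  unfolding profiles_def by (auto simp: PiE_def extensional_def)

lemma profiles_mix: assumes "p \<in> profiles n L" "S \<subseteq> {1..n}" "\<And>i. i \<in> S \<Longrightarrow> D i \<in> Pset L"
  shows "(\<lambda>i. if i \<in> S then D i else p i) \<in> profiles n L"
  using assms unfolding profiles_def by (auto simp: PiE_def extensional_def Pi_def)

lemma profiles_mem: "p \<in> profiles n L \<Longrightarrow> i \<in> {1..n} \<Longrightarrow> p i \<in> Pset L"
  unfolding profiles_def by auto

lemma profiles_out: "p \<in> profiles n L \<Longrightarrow> i \<notin> {1..n} \<Longrightarrow> p i = undefined"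
  unfolding profiles_def by auto

lemma profile_chain:
  assumes fin: "finite T" and T: "T \<subseteq> {1..n}" and qz: "qz \<in> profiles n L"
    and D: "\<And>i. i \<in> T \<Longrightarrow> D i \<in> Pset L"
    and I0: "Inv qz"
    and step: "\<And>q i. q \<in> profiles n L \<Longrightarrow> i \<in> T \<Longrightarrow> q i = qz i \<Longrightarrow> Inv q \<Longrightarrow> Inv (q(i := D i))"
  shows "Inv (\<lambda>i. if i \<in> T then D i else qz i)"
proof -
  have "Inv (\<lambda>i. if i \<in> S then D i else qz i)" if "S \<subseteq> T" for S
  proof -
    have "finite S" using fin that finite_subset by blast
    then show ?thesis using that
    proof (induction S rule: finite_induct)
      case empty thus ?case using I0 by simp
    next
      case (insert j S)
      let ?Q = "\<lambda>i. if i \<in> S then D i else qz i"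
      have eq: "(\<lambda>i. if i \<in> insert j S then D i else qz i) = ?Q(j := D j)" by (auto simp: fun_eq_iff)
      have ST: "S \<subseteq> T" "j \<in> T" using insert.prems by auto
      have Q: "?Q \<in> profiles n L" using profiles_mix[OF qz, of S D] ST T D by auto
      show ?case unfolding eq using step[OF Q, of j] insert ST by auto
    qed
  qed
  thus ?thesis by simp
qed



context
  fixes n :: nat and L :: "real set" and \<psi> :: "(nat \<Rightarrow> real measure) \<Rightarrow> real measure"
  assumes n: "n \<ge> 1" and Lb: "L \<in> sets borel" and PAF: "is_PAF n L \<psi>"
    and SP: "level_SP n L \<psi>" and PR: "proportional n L \<psi>"
begin

lemma psiP: "q \<in> profiles n L \<Longrightarrow> \<psi> q \<in> Pset L"
  using PAF unfolding is_PAF_def by blast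

lemma SP_low: "q \<in> profiles n L \<Longrightarrow> i \<in> {1..n} \<Longrightarrow> r \<in> Pset L \<Longrightarrow> a \<in> L \<Longrightarrow>
  cdfL L (q i) a < cdfL L (\<psi> q) a \<Longrightarrow> cdfL L (\<psi> q) a \<le> cdfL L (\<psi> (q(i := r))) a"
  using SP unfolding level_SP_def by blast

lemma SP_high: "q \<in> profiles n L \<Longrightarrow> i \<in> {1..n} \<Longrightarrow> r \<in> Pset L \<Longrightarrow> a \<in> L \<Longrightarrow>
  cdfL L (q i) a > cdfL L (\<psi> q) a \<Longrightarrow> cdfL L (\<psi> q) a \<ge> cdfL L (\<psi> (q(i := r))) a"
  using SP unfolding level_SP_def by blast

lemma R0:
  assumes q: "q \<in> profiles n L" and i: "i \<in> {1..n}" and a: "a \<in> L" and c: "c \<in> L" "a < c"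
  shows "cdfL L (\<psi> (q(i := return (LamSp L) c))) a \<le> cdfL L (\<psi> q) a"
proof -
  let ?d = "return (LamSp L) c"
  let ?q2 = "q(i := ?d)"
  have d: "?d \<in> Pset L" using return_Pset[OF c(1)] .
  have q2: "?q2 \<in> profiles n L" using profiles_upd[OF q i d] .
  have bk: "?q2(i := q i) = q" by simp
  have qi: "q i \<in> Pset L" using profiles_mem[OF q i] .
  show ?thesis
  proof (cases "cdfL L (q i) a > cdfL L (\<psi> q) a")
    case True thus ?thesis using SP_high[OF q i d a] by simp
  next
    case False
    show ?thesis
    proof (cases "0 < cdfL L (\<psi> ?q2) a")
      case True
      have "cdfL L (?q2 i) a = 0" using cdfL_return[OF Lb c(1)] c by simp
      hence "cdfL L (\<psi> ?q2) a \<le> cdfL L (\<psi> (?q2(i := q i))) a"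
        using SP_low[OF q2 i qi a] True by simp
      thus ?thesis using bk by simp
    next
      case False thus ?thesis using cdfL_nonneg[of L "\<psi> q" a] by simp
    qed
  qed
qed

lemma R1:
  assumes q: "q \<in> profiles n L" and i: "i \<in> {1..n}" and a: "a \<in> L" and b: "b \<in> L" "b \<le> a"
  shows "cdfL L (\<psi> q) a \<le> cdfL L (\<psi> (q(i := return (LamSp L) b))) a"
proof -
  let ?d = "return (LamSp L) b"
  let ?q2 = "q(i := ?d)"
  have d: "?d \<in> Pset L" using return_Pset[OF b(1)] .
  have q2: "?q2 \<in> profiles n L" using profiles_upd[OF q i d] .
  have bk: "?q2(i := q i) = q" by simp
  have qi: "q i \<in> Pset L" using profiles_mem[OF q i] .
  show ?thesis
  proof (cases "cdfL L (q i) a < cdfL L (\<psi> q) a")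
    case True thus ?thesis using SP_low[OF q i d a] by simp
  next
    case False
    show ?thesis
    proof (cases "cdfL L (\<psi> ?q2) a < 1")
      case True
      have "cdfL L (?q2 i) a = 1" using cdfL_return[OF Lb b(1)] b by simp
      hence "cdfL L (\<psi> ?q2) a \<ge> cdfL L (\<psi> (?q2(i := q i))) a"
        using SP_high[OF q2 i qi a] True by simp
      thus ?thesis using bk by simp
    next
      case False thus ?thesis using cdfL_le1[OF psiP[OF q], of a] by simp
    qed
  qed
qed

lemma P1:
  assumes q: "q \<in> profiles n L" and i: "i \<in> {1..n}" and a: "a \<in> L"
    and gt: "cdfL L (q i) a > cdfL L (\<psi> q) a"
  shows "cdfL L (\<psi> (q(i := return (LamSp L) a))) a = cdfL L (\<psi> q) a"
  using SP_high[OF q i return_Pset[OF a] a gt] R1[OF q i a a order_refl] by simp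

lemma P0:
  assumes q: "q \<in> profiles n L" and i: "i \<in> {1..n}" and a: "a \<in> L" and c: "c \<in> L" "a < c"
    and lt: "cdfL L (q i) a < cdfL L (\<psi> q) a"
  shows "cdfL L (\<psi> (q(i := return (LamSp L) c))) a = cdfL L (\<psi> q) a"
  using SP_low[OF q i return_Pset[OF c(1)] a lt] R0[OF q i a c] by simp

lemma PRcdf:
  assumes pt: "\<And>i. i \<in> {1..n} \<Longrightarrow> pt i \<in> L" and a: "a \<in> L"
  shows "cdfL L (\<psi> (\<lambda>i\<in>{1..n}. return (LamSp L) (pt i))) a = real (card {i \<in> {1..n}. pt i \<le> a}) / real n"
proof -
  have "measure (\<psi> (\<lambda>i\<in>{1..n}. return (LamSp L) (pt i))) {x \<in> L. x \<le> a}
      = real (card {i \<in> {1..n}. pt i \<in> {x \<in> L. x \<le> a}}) / real n"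
    using PR Iic_in_LamSp[OF Lb, of a] pt unfolding proportional_def by blast
  moreover have "{i \<in> {1..n}. pt i \<in> {x \<in> L. x \<le> a}} = {i \<in> {1..n}. pt i \<le> a}" using pt by auto
  ultimately show ?thesis unfolding cdfL_def by simp
qed

lemma unique_at:
  assumes p: "p \<in> profiles n L" and a: "a \<in> L"
  shows "cdfL L (\<psi> p) a = pc_median n (\<lambda>i. cdfL L (p i) a)"
proof -
  define x where "x = (\<lambda>i. cdfL L (p i) a)"
  define y where "y = cdfL L (\<psi> p) a"
  have x0: "\<And>i. 0 \<le> x i" unfolding x_def by (rule cdfL_nonneg)
  have x1: "\<And>i. i \<in> {1..n} \<Longrightarrow> x i \<le> 1" unfolding x_def using cdfL_le1 profiles_mem[OF p] by blast
  have y0: "0 \<le> y" unfolding y_def by (rule cdfL_nonneg)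
  have y1: "y \<le> 1" unfolding y_def using cdfL_le1 psiP[OF p] by blast
  have "y = pc_median n x"
  proof (cases "\<exists>c\<in>L. a < c")
    case False
    hence le: "\<And>c. c \<in> L \<Longrightarrow> c \<le> a" by (auto simp: not_less)
    have xi: "\<And>i. i \<in> {1..n} \<Longrightarrow> x i = 1" unfolding x_def using cdfL_top[OF profiles_mem[OF p] le] by blast
    have "y = 1" unfolding y_def using cdfL_top[OF psiP[OF p] le] by blast
    moreover have "pc_median n x = 1"
    proof -
      have "{i \<in> {1..n}. x i = 1} = {1..n}" using xi by auto
      hence "cnt n x (\<lambda>z. z = 1) = n" unfolding cnt_def by simp
      thus ?thesis using med_01[OF n, of x] xi n by simp
    qed
    ultimately show ?thesis by simp
  next
    case True
    then obtain c where c: "c \<in> L" "a < c" by blast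
    have dA: "return (LamSp L) a \<in> Pset L" using return_Pset[OF a] .
    have dC: "return (LamSp L) c \<in> Pset L" using return_Pset[OF c(1)] .
    define U where "U = {i \<in> {1..n}. y < x i}"
    have U: "U \<subseteq> {1..n}" "finite U" unfolding U_def by auto
    define Q where "Q = (\<lambda>i. if i \<in> U then return (LamSp L) a else p i)"
    have Qp: "Q \<in> profiles n L" unfolding Q_def using profiles_mix[OF p U(1), of "\<lambda>_. return (LamSp L) a"] dA by simp
    have st1: "cdfL L (\<psi> Q) a = y" unfolding Q_def
    proof (rule profile_chain[where Inv="\<lambda>q. cdfL L (\<psi> q) a = y" and T=U and qz=p, OF U(2) U(1) p])
      show "cdfL L (\<psi> p) a = y" unfolding y_def ..
      show "return (LamSp L) a \<in> Pset L" by (rule dA)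
    next
      fix q i assume q: "q \<in> profiles n L" and i: "i \<in> U" and qi: "q i = p i" and I: "cdfL L (\<psi> q) a = y"
      have "cdfL L (q i) a > cdfL L (\<psi> q) a" using qi I i unfolding U_def x_def by simp
      thus "cdfL L (\<psi> (q(i := return (LamSp L) a))) a = y" using P1[OF q _ a] i U I by auto
    qed
    let ?T = "{1..n} - U"
    have st2: "cdfL L (\<psi> (\<lambda>i. if i \<in> ?T then return (LamSp L) c else Q i)) a \<le> y"
    proof (rule profile_chain[where Inv="\<lambda>q. cdfL L (\<psi> q) a \<le> y" and T="?T" and qz=Q, OF _ _ Qp])
      show "cdfL L (\<psi> Q) a \<le> y" using st1 by simp
      show "return (LamSp L) c \<in> Pset L" by (rule dC)
    next
      fix q i assume q: "q \<in> profiles n L" and i: "i \<in> ?T" and I: "cdfL L (\<psi> q) a \<le> y"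
      thus "cdfL L (\<psi> (q(i := return (LamSp L) c))) a \<le> y" using R0[OF q _ a c] by force
    qed auto
    have eqfun: "(\<lambda>i. if i \<in> ?T then return (LamSp L) c else Q i)
       = (\<lambda>i\<in>{1..n}. return (LamSp L) (if i \<in> U then a else c))"
      using profiles_out[OF p] U(1) by (auto simp: fun_eq_iff Q_def)
    have "cdfL L (\<psi> (\<lambda>i\<in>{1..n}. return (LamSp L) (if i \<in> U then a else c))) a
        = real (card {i \<in> {1..n}. (if i \<in> U then a else c) \<le> a}) / real n"
      by (rule PRcdf) (use a c in auto)
    moreover have "{i \<in> {1..n}. (if i \<in> U then a else c) \<le> a} = U" using U(1) c by auto
    ultimately have cU: "real (card U) / real n \<le> y" using st2 eqfun by simp
    have cUn: "card U < n"
    proof (rule ccontr)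
      assume "\<not> card U < n"
      hence "card U = n" using card_mono[OF _ U(1)] by simp
      hence "U = {1..n}" using card_subset_eq[OF _ U(1)] by simp
      hence "1 \<in> U" using n by auto
      hence "y < x 1" unfolding U_def by simp
      moreover have "1 \<le> y" using cU \<open>card U = n\<close> n by simp
      ultimately show False using x1[of 1] n by simp
    qed
    have up: "pc_median n x \<le> y"
      by (rule med_upper[OF n _ cUn cU]) (simp add: cnt_def U_def)
    define V where "V = {i \<in> {1..n}. x i < y}"
    have V: "V \<subseteq> {1..n}" "finite V" unfolding V_def by auto
    define Q' where "Q' = (\<lambda>i. if i \<in> V then return (LamSp L) c else p i)"
    have Qp': "Q' \<in> profiles n L" unfolding Q'_def using profiles_mix[OF p V(1), of "\<lambda>_. return (LamSp L) c"] dC by simp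
    have st1': "cdfL L (\<psi> Q') a = y" unfolding Q'_def
    proof (rule profile_chain[where Inv="\<lambda>q. cdfL L (\<psi> q) a = y" and T=V and qz=p, OF V(2) V(1) p])
      show "cdfL L (\<psi> p) a = y" unfolding y_def ..
      show "return (LamSp L) c \<in> Pset L" by (rule dC)
    next
      fix q i assume q: "q \<in> profiles n L" and i: "i \<in> V" and qi: "q i = p i" and I: "cdfL L (\<psi> q) a = y"
      have "cdfL L (q i) a < cdfL L (\<psi> q) a" using qi I i unfolding V_def x_def by simp
      thus "cdfL L (\<psi> (q(i := return (LamSp L) c))) a = y" using P0[OF q _ a c] i V I by auto
    qed
    let ?T' = "{1..n} - V"
    have st2': "y \<le> cdfL L (\<psi> (\<lambda>i. if i \<in> ?T' then return (LamSp L) a else Q' i)) a"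
    proof (rule profile_chain[where Inv="\<lambda>q. y \<le> cdfL L (\<psi> q) a" and T="?T'" and qz=Q', OF _ _ Qp'])
      show "y \<le> cdfL L (\<psi> Q') a" using st1' by simp
      show "return (LamSp L) a \<in> Pset L" by (rule dA)
    next
      fix q i assume q: "q \<in> profiles n L" and i: "i \<in> ?T'" and I: "y \<le> cdfL L (\<psi> q) a"
      thus "y \<le> cdfL L (\<psi> (q(i := return (LamSp L) a))) a" using R1[OF q _ a a order_refl] by force
    qed auto
    have eqfun': "(\<lambda>i. if i \<in> ?T' then return (LamSp L) a else Q' i)
       = (\<lambda>i\<in>{1..n}. return (LamSp L) (if i \<in> V then c else a))"
      using profiles_out[OF p] V(1) by (auto simp: fun_eq_iff Q'_def)
    have "cdfL L (\<psi> (\<lambda>i\<in>{1..n}. return (LamSp L) (if i \<in> V then c else a))) a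
        = real (card {i \<in> {1..n}. (if i \<in> V then c else a) \<le> a}) / real n"
      by (rule PRcdf) (use a c in auto)
    moreover have "{i \<in> {1..n}. (if i \<in> V then c else a) \<le> a} = {i \<in> {1..n}. y \<le> x i}"
      using c unfolding V_def by (auto simp: not_less)
    ultimately have cV: "y \<le> real (cnt n x (\<lambda>z. y \<le> z)) / real n" using st2' eqfun' by (simp add: cnt_def)
    have lo: "y \<le> pc_median n x"
    proof (cases "1 \<le> cnt n x (\<lambda>z. y \<le> z)")
      case True show ?thesis using med_lower[OF n refl True cV] .
    next
      case False
      hence "cnt n x (\<lambda>z. y \<le> z) = 0" by simp
      hence "y \<le> 0" using cV by simp
      thus ?thesis using med_nonneg[OF n, of x] x0 by force
    qed
    show ?thesis using up lo by simp
  qed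
  thus ?thesis unfolding x_def y_def .
qed

end



definition msum :: "'i set \<Rightarrow> ('i \<Rightarrow> real measure) \<Rightarrow> real measure" where
  "msum I M = measure_of UNIV (sets borel) (\<lambda>A. \<Sum>i\<in>I. emeasure (M i) A)"

lemma sets_msum[simp]: "sets (msum I M) = sets borel"
  unfolding msum_def using sets.sigma_sets_eq[of borel] by (simp add: sets_measure_of_conv)

lemma space_msum[simp]: "space (msum I M) = UNIV"
  unfolding msum_def by (simp add: space_measure_of_conv)

lemma emeasure_msum:
  assumes I: "finite I" and M: "\<And>i. i \<in> I \<Longrightarrow> sets (M i) = sets borel" and A: "A \<in> sets borel"
  shows "emeasure (msum I M) A = (\<Sum>i\<in>I. emeasure (M i) A)"
  unfolding msum_def
proof (rule emeasure_measure_of_sigma[OF _ _ _ A])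
  show "sigma_algebra UNIV (sets borel)" using sets.sigma_algebra_axioms[of borel] by simp
  show "positive (sets borel) (\<lambda>A. \<Sum>i\<in>I. emeasure (M i) A)" by (simp add: positive_def)
  show "countably_additive (sets borel) (\<lambda>A. \<Sum>i\<in>I. emeasure (M i) A)"
    unfolding countably_additive_def
  proof (intro allI impI)
    fix F :: "nat \<Rightarrow> real set" assume F: "range F \<subseteq> sets borel" "disjoint_family F"
    have "(\<Sum>j. \<Sum>i\<in>I. emeasure (M i) (F j)) = (\<Sum>i\<in>I. \<Sum>j. emeasure (M i) (F j))"
      by (rule suminf_sum) (rule summableI)
    also have "\<dots> = (\<Sum>i\<in>I. emeasure (M i) (\<Union>j. F j))"
      by (intro sum.cong refl suminf_emeasure) (use F M in auto)
    finally show "(\<Sum>j. \<Sum>i\<in>I. emeasure (M i) (F j)) = (\<Sum>i\<in>I. emeasure (M i) (\<Union>j. F j))" .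
  qed
qed

lemma msum_fbm:
  assumes I: "finite I" and M: "\<And>i. i \<in> I \<Longrightarrow> finite_borel_measure (M i)"
  shows "finite_borel_measure (msum I M)" "\<And>x. cdf (msum I M) x = (\<Sum>i\<in>I. cdf (M i) x)"
proof -
  have sM: "\<And>i. i \<in> I \<Longrightarrow> sets (M i) = sets borel" using M finite_borel_measure.M_is_borel by blast
  have em: "\<And>A. A \<in> sets borel \<Longrightarrow> emeasure (msum I M) A = ennreal (\<Sum>i\<in>I. measure (M i) A)"
  proof -
    fix A :: "real set" assume A: "A \<in> sets borel"
    have "emeasure (msum I M) A = (\<Sum>i\<in>I. emeasure (M i) A)" by (rule emeasure_msum[OF I sM A])
    also have "\<dots> = (\<Sum>i\<in>I. ennreal (measure (M i) A))"
      by (intro sum.cong refl) (use M in \<open>simp add: finite_borel_measure_def finite_measure.emeasure_eq_measure\<close>)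
    also have "\<dots> = ennreal (\<Sum>i\<in>I. measure (M i) A)" by simp
    finally show "emeasure (msum I M) A = ennreal (\<Sum>i\<in>I. measure (M i) A)" .
  qed
  interpret finite_measure "msum I M"
    by (rule finite_measureI) (simp add: em)
  show "finite_borel_measure (msum I M)" by unfold_locales simp
  fix x
  have "cdf (msum I M) x = measure (msum I M) {..x}" by (simp add: cdf_def)
  also have "\<dots> = (\<Sum>i\<in>I. measure (M i) {..x})"
    unfolding measure_def[of "msum I M"] using em[of "{..x}"] by (simp add: sum_nonneg)
  finally show "cdf (msum I M) x = (\<Sum>i\<in>I. cdf (M i) x)" by (simp add: cdf_def)
qed

definition Dq :: "real measure \<Rightarrow> real measure" where "Dq q = distr q borel (\<lambda>x. x)"

lemma Dq_meas: "q \<in> Pset L \<Longrightarrow> (\<lambda>x. x) \<in> measurable q borel"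
proof -
  assume q: "q \<in> Pset L"
  have "(\<lambda>x::real. x) \<in> measurable (restrict_space borel L) borel"
    by (rule measurable_restrict_space1) simp
  thus ?thesis using Pset_D(1)[OF q] unfolding LamSp_def by (simp cong: measurable_cong_sets)
qed

lemma Dq_real_distribution: "q \<in> Pset L \<Longrightarrow> real_distribution (Dq q)"
  unfolding Dq_def using Pset_D(2) Dq_meas by (metis prob_space.real_distribution_distr)

lemma cdf_Dq: "q \<in> Pset L \<Longrightarrow> cdf (Dq q) x = cdfL L q x"
  unfolding Dq_def cdf_def cdfL_def using Pset_D(3)[of q L]
  by (subst measure_distr) (auto simp: Dq_meas intro!: arg_cong[where f="measure q"])

lemma emeasure_Dq_compl: "q \<in> Pset L \<Longrightarrow> L \<in> sets borel \<Longrightarrow> emeasure (Dq q) (UNIV - L) = 0"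
  unfolding Dq_def using Pset_D(3)[of q L]
  by (subst emeasure_distr) (auto simp: Dq_meas Int_absorb2 Diff_Int_distrib2)



definition Gf :: "nat \<Rightarrow> real set \<Rightarrow> (nat \<Rightarrow> real measure) \<Rightarrow> real \<Rightarrow> real" where
  "Gf n L p x = pc_median n (\<lambda>i. cdfL L (p i) x)"

definition Sf :: "nat \<Rightarrow> real set \<Rightarrow> (nat \<Rightarrow> real measure) \<Rightarrow> real \<Rightarrow> real" where
  "Sf n L p x = (\<Sum>i\<in>{1..n}. cdfL L (p i) x)"

definition Hf :: "nat \<Rightarrow> real set \<Rightarrow> (nat \<Rightarrow> real measure) \<Rightarrow> real \<Rightarrow> real" where
  "Hf n L p x = Sf n L p x - Gf n L p x"

context
  fixes n :: nat and L :: "real set" and p :: "nat \<Rightarrow> real measure"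
  assumes n: "n \<ge> 1" and p: "p \<in> profiles n L"
begin

lemma RD: "i \<in> {1..n} \<Longrightarrow> real_distribution (Dq (p i))"
  using Dq_real_distribution profiles_mem[OF p] by blast

lemma FBM: "i \<in> {1..n} \<Longrightarrow> finite_borel_measure (Dq (p i))"
  using RD real_distribution.finite_borel_measure_M by blast

lemma cdfL_eq: "i \<in> {1..n} \<Longrightarrow> cdfL L (p i) = cdf (Dq (p i))"
  using cdf_Dq[OF profiles_mem[OF p]] by (auto simp: fun_eq_iff)

lemma F_mono: "i \<in> {1..n} \<Longrightarrow> x \<le> y \<Longrightarrow> cdfL L (p i) x \<le> cdfL L (p i) y"
  using cdfL_eq FBM finite_borel_measure.cdf_nondecreasing by metis

lemma F_rc: "i \<in> {1..n} \<Longrightarrow> ((\<lambda>x. cdfL L (p i) x) \<longlongrightarrow> cdfL L (p i) a) (at_right a)"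
  using cdfL_eq[of i] FBM[of i] finite_borel_measure.cdf_is_right_cont[of "Dq (p i)" a]
  by (simp add: continuous_within)

lemma F_bot: "i \<in> {1..n} \<Longrightarrow> ((\<lambda>x. cdfL L (p i) x) \<longlongrightarrow> 0) at_bot"
  using cdfL_eq[of i] FBM[of i] finite_borel_measure.cdf_lim_at_bot[of "Dq (p i)"] by simp

lemma F_top: "i \<in> {1..n} \<Longrightarrow> ((\<lambda>x. cdfL L (p i) x) \<longlongrightarrow> 1) at_top"
  using cdfL_eq[of i] RD[of i] real_distribution.cdf_lim_at_top_prob[of "Dq (p i)"] by simp

lemma F_le1: "i \<in> {1..n} \<Longrightarrow> cdfL L (p i) x \<le> 1"
  using cdfL_le1 profiles_mem[OF p] by blast

lemma G_incr:
  assumes xy: "x \<le> y"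
  shows "Gf n L p x \<le> Gf n L p y" "Gf n L p y \<le> Gf n L p x + (Sf n L p y - Sf n L p x)"
proof -
  show "Gf n L p x \<le> Gf n L p y" unfolding Gf_def by (rule med_mono[OF n]) (simp add: F_mono xy)
  have d: "Sf n L p y - Sf n L p x = (\<Sum>i\<in>{1..n}. cdfL L (p i) y - cdfL L (p i) x)"
    unfolding Sf_def by (simp add: sum_subtractf)
  have "Gf n L p y \<le> Gf n L p x + (\<Sum>i\<in>{1..n}. cdfL L (p i) y - cdfL L (p i) x)"
    unfolding Gf_def
  proof (rule med_shift[OF n])
    show "0 \<le> (\<Sum>i\<in>{1..n}. cdfL L (p i) y - cdfL L (p i) x)"
      by (rule sum_nonneg) (simp add: F_mono xy)
    fix i assume i: "i \<in> {1..n}"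
    have "cdfL L (p i) y - cdfL L (p i) x \<le> (\<Sum>i\<in>{1..n}. cdfL L (p i) y - cdfL L (p i) x)"
      by (rule member_le_sum[OF i]) (auto simp: F_mono xy)
    thus "cdfL L (p i) y \<le> cdfL L (p i) x + (\<Sum>i\<in>{1..n}. cdfL L (p i) y - cdfL L (p i) x)" by simp
  qed
  thus "Gf n L p y \<le> Gf n L p x + (Sf n L p y - Sf n L p x)" using d by simp
qed

lemma S_rc: "(Sf n L p \<longlongrightarrow> Sf n L p a) (at_right a)"
  unfolding Sf_def by (rule tendsto_sum) (rule F_rc)

lemma G_rc: "(Gf n L p \<longlongrightarrow> Gf n L p a) (at_right a)"
proof (rule tendsto_sandwich[where f="\<lambda>_. Gf n L p a" and h="\<lambda>x. Gf n L p a + (Sf n L p x - Sf n L p a)"])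
  show "\<forall>\<^sub>F x in at_right a. Gf n L p a \<le> Gf n L p x"
    using eventually_at_right_less[of a] by eventually_elim (simp add: G_incr)
  show "\<forall>\<^sub>F x in at_right a. Gf n L p x \<le> Gf n L p a + (Sf n L p x - Sf n L p a)"
    using eventually_at_right_less[of a] by eventually_elim (simp add: G_incr)
  show "((\<lambda>_. Gf n L p a) \<longlongrightarrow> Gf n L p a) (at_right a)" by simp
  have "((\<lambda>x. Gf n L p a + (Sf n L p x - Sf n L p a)) \<longlongrightarrow> Gf n L p a + (Sf n L p a - Sf n L p a)) (at_right a)"
    by (intro tendsto_intros S_rc)
  thus "((\<lambda>x. Gf n L p a + (Sf n L p x - Sf n L p a)) \<longlongrightarrow> Gf n L p a) (at_right a)" by simp
qed

lemma G_nonneg: "0 \<le> Gf n L p x"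
  unfolding Gf_def by (rule med_nonneg[OF n]) (rule cdfL_nonneg)

lemma G_le1: "Gf n L p x \<le> 1"
  unfolding Gf_def by (rule med_le1[OF n]) (rule F_le1)

lemma med_const0: "pc_median n (\<lambda>_. 0) = 0"
  using med_01[OF n, of "\<lambda>_. 0"] by (simp add: cnt_def)

lemma med_const1: "pc_median n (\<lambda>_. 1) = 1"
proof -
  have "{i \<in> {1..n}. (1::real) = 1} = {1..n}" by blast
  hence "cnt n (\<lambda>_. 1) (\<lambda>x. x = 1) = n" unfolding cnt_def by (metis card_atLeastAtMost diff_Suc_1)
  thus ?thesis using med_01[OF n, of "\<lambda>_. 1"] n by simp
qed

lemma G_le_S: "Gf n L p x \<le> Sf n L p x"
proof -
  have "Gf n L p x \<le> pc_median n (\<lambda>_. 0) + Sf n L p x"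
    unfolding Gf_def
  proof (rule med_shift[OF n])
    show "0 \<le> Sf n L p x" unfolding Sf_def by (rule sum_nonneg) (rule cdfL_nonneg)
    fix i assume i: "i \<in> {1..n}"
    have "cdfL L (p i) x \<le> (\<Sum>i\<in>{1..n}. cdfL L (p i) x)"
      by (rule member_le_sum[OF i]) (auto simp: cdfL_nonneg)
    thus "cdfL L (p i) x \<le> 0 + Sf n L p x" unfolding Sf_def by simp
  qed
  thus ?thesis using med_const0 by simp
qed

lemma G_ge: "1 - (real n - Sf n L p x) \<le> Gf n L p x"
proof -
  have Sx: "real n - Sf n L p x = (\<Sum>i\<in>{1..n}. 1 - cdfL L (p i) x)"
    unfolding Sf_def by (simp add: sum_subtractf)
  have "pc_median n (\<lambda>_. 1) \<le> Gf n L p x + (real n - Sf n L p x)"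
    unfolding Gf_def Sx
  proof (rule med_shift[OF n])
    show "0 \<le> (\<Sum>i\<in>{1..n}. 1 - cdfL L (p i) x)" by (rule sum_nonneg) (simp add: F_le1)
    fix i assume i: "i \<in> {1..n}"
    have "1 - cdfL L (p i) x \<le> (\<Sum>i\<in>{1..n}. 1 - cdfL L (p i) x)"
      by (rule member_le_sum[OF i]) (auto simp: F_le1)
    thus "1 \<le> cdfL L (p i) x + (\<Sum>i\<in>{1..n}. 1 - cdfL L (p i) x)" by simp
  qed
  thus ?thesis using med_const1 by simp
qed

lemma S_bot: "(Sf n L p \<longlongrightarrow> 0) at_bot"
proof -
  have "((\<lambda>x. \<Sum>i\<in>{1..n}. cdfL L (p i) x) \<longlongrightarrow> (\<Sum>i\<in>{1..n}. (0::real))) at_bot"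
    by (rule tendsto_sum) (rule F_bot)
  thus ?thesis unfolding Sf_def[abs_def] by simp
qed

lemma S_top: "(Sf n L p \<longlongrightarrow> real n) at_top"
proof -
  have "((\<lambda>x. \<Sum>i\<in>{1..n}. cdfL L (p i) x) \<longlongrightarrow> (\<Sum>i\<in>{1..n}. (1::real))) at_top"
    by (rule tendsto_sum) (rule F_top)
  thus ?thesis unfolding Sf_def[abs_def] by simp
qed

lemma G_bot: "(Gf n L p \<longlongrightarrow> 0) at_bot"
  by (rule tendsto_sandwich[where f="\<lambda>_. 0" and h="Sf n L p"])
     (auto simp: G_nonneg G_le_S S_bot)

lemma G_top: "(Gf n L p \<longlongrightarrow> 1) at_top"
proof (rule tendsto_sandwich[where f="\<lambda>x. 1 - (real n - Sf n L p x)" and h="\<lambda>_. 1"])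
  have "((\<lambda>x. 1 - (real n - Sf n L p x)) \<longlongrightarrow> 1 - (real n - real n)) at_top"
    by (intro tendsto_intros S_top)
  thus "((\<lambda>x. 1 - (real n - Sf n L p x)) \<longlongrightarrow> 1) at_top" by simp
qed (auto simp: G_ge G_le1)

lemma H_mono: "x \<le> y \<Longrightarrow> Hf n L p x \<le> Hf n L p y"
  unfolding Hf_def using G_incr(2)[of x y] by simp

lemma H_rc: "(Hf n L p \<longlongrightarrow> Hf n L p a) (at_right a)"
  unfolding Hf_def[abs_def] by (intro tendsto_intros S_rc G_rc)

lemma H_bot: "(Hf n L p \<longlongrightarrow> 0) at_bot"
proof -
  have "((\<lambda>x. Sf n L p x - Gf n L p x) \<longlongrightarrow> 0 - 0) at_bot" by (intro tendsto_intros S_bot G_bot)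
  thus ?thesis unfolding Hf_def[abs_def] by simp
qed

lemma H_top: "(Hf n L p \<longlongrightarrow> real n - 1) at_top"
  unfolding Hf_def[abs_def] by (intro tendsto_intros S_top G_top)

end



definition psiPC :: "nat \<Rightarrow> real set \<Rightarrow> (nat \<Rightarrow> real measure) \<Rightarrow> real measure" where
  "psiPC n L p = restrict_space (interval_measure (Gf n L p)) L"

lemma sets_Dq[simp]: "sets (Dq q) = sets borel" by (simp add: Dq_def)

context
  fixes n :: nat and L :: "real set" and p :: "nat \<Rightarrow> real measure"
  assumes n: "n \<ge> 1" and Lb: "L \<in> sets borel" and p: "p \<in> profiles n L"
begin

abbreviation "mu \<equiv> interval_measure (Gf n L p)"
abbreviation "nu \<equiv> interval_measure (Hf n L p)"

lemma G_rcc: "continuous (at_right a) (Gf n L p)"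
  unfolding continuous_within using G_rc[OF n p] .

lemma H_rcc: "continuous (at_right a) (Hf n L p)"
  unfolding continuous_within using H_rc[OF n p] .

lemma mu_rd: "real_distribution mu"
  by (rule real_distribution_interval_measure) (use G_incr(1)[OF n p] G_rcc G_bot[OF n p] G_top[OF n p] in auto)

lemma mu_cdf: "cdf mu = Gf n L p"
  by (rule cdf_interval_measure) (use G_incr(1)[OF n p] G_rcc G_bot[OF n p] in auto)

lemma nu_fbm: "finite_borel_measure nu"
  by (rule finite_borel_measure_interval_measure[where m="real n - 1"])
     (use H_mono[OF n p] H_rcc H_bot[OF n p] H_top[OF n p] n in auto)

lemma nu_cdf: "cdf nu = Hf n L p"
  by (rule cdf_interval_measure) (use H_mono[OF n p] H_rcc H_bot[OF n p] in auto)

lemma mu_fbm: "finite_borel_measure mu"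
  using mu_rd real_distribution.finite_borel_measure_M by blast

definition "TT = msum {0::nat, 1} (\<lambda>i. if i = 0 then mu else nu)"
definition "SS = msum {1..n} (\<lambda>i. Dq (p i))"

lemma TT_eq_SS: "TT = SS"
proof -
  have T: "finite_borel_measure TT" "\<And>x. cdf TT x = (\<Sum>i\<in>{0::nat,1}. cdf (if i = 0 then mu else nu) x)"
    unfolding TT_def by (rule msum_fbm; use mu_fbm nu_fbm in auto)+
  have S: "finite_borel_measure SS" "\<And>x. cdf SS x = (\<Sum>i\<in>{1..n}. cdf (Dq (p i)) x)"
    unfolding SS_def by (rule msum_fbm; use FBM[OF n p] in auto)+
  show ?thesis
  proof (rule cdf_unique'[OF T(1) S(1)])
    show "cdf TT = cdf SS"
    proof
      fix x
      have "cdf TT x = Gf n L p x + Hf n L p x" using T(2)[of x] mu_cdf nu_cdf by simp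
      also have "\<dots> = Sf n L p x" unfolding Hf_def by simp
      also have "\<dots> = cdf SS x" unfolding S(2) Sf_def using cdfL_eq[OF n p] by simp
      finally show "cdf TT x = cdf SS x" .
    qed
  qed
qed

lemma mu_null: "emeasure mu (UNIV - L) = 0"
proof -
  have C: "UNIV - L \<in> sets borel" using Lb by auto
  have "emeasure TT (UNIV - L) = emeasure mu (UNIV - L) + emeasure nu (UNIV - L)"
    unfolding TT_def by (subst emeasure_msum) (use C in auto)
  moreover have "emeasure SS (UNIV - L) = 0"
    unfolding SS_def by (subst emeasure_msum) (use C emeasure_Dq_compl[OF profiles_mem[OF p] Lb] RD[OF n p] in
      \<open>auto simp: real_distribution_def prob_space_def finite_borel_measure.M_is_borel\<close>)
  ultimately show ?thesis using TT_eq_SS by simp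
qed

lemma mu_L: "emeasure mu L = 1"
proof -
  interpret rd: real_distribution mu by (rule mu_rd)
  have "rd.prob (UNIV - L) = 0" using mu_null by (simp add: rd.emeasure_eq_measure)
  hence "rd.prob L = 1" using rd.prob_compl[of L] Lb by simp
  thus ?thesis by (simp add: rd.emeasure_eq_measure)
qed

lemma psiPC_Pset: "psiPC n L p \<in> Pset L"
  unfolding Pset_def psiPC_def LamSp_def
proof (intro CollectI conjI)
  show "sets (restrict_space mu L) = sets (restrict_space borel L)"
    by (simp add: sets_restrict_space)
  show "prob_space (restrict_space mu L)"
    by (rule prob_space_restrict_space) (use Lb mu_L in auto)
qed

lemma psiPC_cdf: "cdfL L (psiPC n L p) a = Gf n L p a"
proof -
  have null: "UNIV - L \<in> null_sets mu" using mu_null Lb by (auto simp: null_sets_def)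
  have "cdfL L (psiPC n L p) a = measure mu {x \<in> L. x \<le> a}"
    unfolding cdfL_def psiPC_def by (subst measure_restrict_space) (use Lb in auto)
  also have "{x \<in> L. x \<le> a} = {..a} - (UNIV - L)" by auto
  also have "measure mu \<dots> = measure mu {..a}" by (rule measure_Diff_null_set[OF _ null]) simp
  also have "\<dots> = Gf n L p a" using fun_cong[OF mu_cdf, of a] by (simp add: cdf_def)
  finally show ?thesis .
qed

lemma psiPC_measure: "A \<in> sets borel \<Longrightarrow> A \<subseteq> L \<Longrightarrow> measure (psiPC n L p) A = measure mu A"
  unfolding psiPC_def by (subst measure_restrict_space) (use Lb in auto)

end



lemma exist_SP:
  assumes n: "n \<ge> 1" and Lb: "L \<in> sets borel"
  shows "level_SP n L (psiPC n L)"
  unfolding level_SP_def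
proof (intro ballI conjI impI)
  fix i p q a assume i: "i \<in> {1..n}" and p: "p \<in> profiles n L" and q: "q \<in> Pset L" and a: "a \<in> L"
  have p2: "p(i := q) \<in> profiles n L" using profiles_upd[OF p i q] .
  let ?v = "\<lambda>j. cdfL L (p j) a"
  have e1: "cdfL L (psiPC n L p) a = pc_median n ?v" using psiPC_cdf[OF n Lb p] by (simp add: Gf_def)
  have "(\<lambda>j. cdfL L ((p(i := q)) j) a) = ?v(i := cdfL L q a)" by (simp add: fun_eq_iff)
  hence e2: "cdfL L (psiPC n L (p(i := q))) a = pc_median n (?v(i := cdfL L q a))"
    using psiPC_cdf[OF n Lb p2] by (simp add: Gf_def)
  {
    assume "cdfL L (p i) a < cdfL L (psiPC n L p) a"
    thus "cdfL L (psiPC n L p) a \<le> cdfL L (psiPC n L (p(i := q))) a"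
      using med_SP_low[OF n i, of ?v] e1 e2 by simp
  next
    assume "cdfL L (p i) a > cdfL L (psiPC n L p) a"
    thus "cdfL L (psiPC n L p) a \<ge> cdfL L (psiPC n L (p(i := q))) a"
      using med_SP_high[OF n i, of ?v] e1 e2 by simp
  }
qed

lemma exist_prop:
  assumes n: "n \<ge> 1" and Lb: "L \<in> sets borel"
  shows "proportional n L (psiPC n L)"
  unfolding proportional_def
proof (intro allI impI ballI)
  fix pt :: "nat \<Rightarrow> real" and A assume pt: "\<forall>i\<in>{1..n}. pt i \<in> L" and A: "A \<in> sets (LamSp L)"
  let ?P = "\<lambda>i\<in>{1..n}. return (LamSp L) (pt i)"
  have P: "?P \<in> profiles n L" unfolding profiles_def using pt return_Pset by auto
  have AL: "A \<subseteq> L" "A \<in> sets borel" using A Lb unfolding LamSp_def by (auto simp: sets_restrict_space_iff)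
  define MD where "MD = distr (measure_pmf (pmf_of_set {1..n})) borel pt"
  have ne: "{1..n} \<noteq> {}" using n by auto
  have MDrd: "real_distribution MD" unfolding MD_def
    by (rule prob_space.real_distribution_distr) (auto simp: measure_pmf.prob_space_axioms)
  have MDm: "measure MD B = real (card ({1..n} \<inter> {i. pt i \<in> B})) / real n" if "B \<in> sets borel" for B
    unfolding MD_def using that ne by (subst measure_distr) (auto simp: measure_pmf_of_set vimage_def)
  have eq: "interval_measure (Gf n L ?P) = MD"
  proof (rule cdf_unique[OF mu_rd[OF n Lb P] MDrd])
    show "cdf (interval_measure (Gf n L ?P)) = cdf MD"
    proof
      fix x
      have c1: "\<And>i. i \<in> {1..n} \<Longrightarrow> cdfL L (?P i) x = (if pt i \<le> x then 1 else 0)"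
        using cdfL_return[OF Lb] pt by simp
      have "Gf n L ?P x = real (cnt n (\<lambda>i. cdfL L (?P i) x) (\<lambda>z. z = 1)) / real n"
        unfolding Gf_def by (rule med_01[OF n]) (use c1 in force)
      also have "cnt n (\<lambda>i. cdfL L (?P i) x) (\<lambda>z. z = 1) = card ({1..n} \<inter> {i. pt i \<in> {..x}})"
        unfolding cnt_def using c1 by (intro arg_cong[where f=card]) auto
      finally have g: "Gf n L ?P x = real (card ({1..n} \<inter> {i. pt i \<in> {..x}})) / real n" .
      have "Gf n L ?P x = measure MD {..x}" unfolding g using MDm[of "{..x}"] by simp
      thus "cdf (interval_measure (Gf n L ?P)) x = cdf MD x"
        using mu_cdf[OF n Lb P] by (simp add: cdf_def)
    qed
  qed
  have "measure (psiPC n L ?P) A = measure MD A"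
    using psiPC_measure[OF n Lb P AL(2) AL(1)] eq by simp
  also have "\<dots> = real (card {i \<in> {1..n}. pt i \<in> A}) / real n"
    using MDm[OF AL(2)] by (simp add: Int_def)
  finally show "measure (psiPC n L ?P) A = real (card {i \<in> {1..n}. pt i \<in> A}) / real n" .
qed

theorem mainTheorem14:
  fixes n :: nat and L :: "real set"
  assumes "n \<ge> 1" and "L \<in> sets borel" and "L \<noteq> {}"
  shows "(\<exists>\<psi>. is_PAF n L \<psi> \<and> is_prop_cumulative n L \<psi> \<and> level_SP n L \<psi> \<and> proportional n L \<psi>)
       \<and> (\<forall>\<psi>. is_PAF n L \<psi> \<and> level_SP n L \<psi> \<and> proportional n L \<psi> \<longrightarrow> is_prop_cumulative n L \<psi>)"
proof
  show "\<exists>\<psi>. is_PAF n L \<psi> \<and> is_prop_cumulative n L \<psi> \<and> level_SP n L \<psi> \<and> proportional n L \<psi>"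
  proof (intro exI conjI)
    show "is_PAF n L (psiPC n L)" unfolding is_PAF_def using psiPC_Pset[OF assms(1,2)] by blast
    show "is_prop_cumulative n L (psiPC n L)" unfolding is_prop_cumulative_def
      using psiPC_cdf[OF assms(1,2)] by (simp add: Gf_def)
    show "level_SP n L (psiPC n L)" by (rule exist_SP[OF assms(1,2)])
    show "proportional n L (psiPC n L)" by (rule exist_prop[OF assms(1,2)])
  qed
  show "\<forall>\<psi>. is_PAF n L \<psi> \<and> level_SP n L \<psi> \<and> proportional n L \<psi> \<longrightarrow> is_prop_cumulative n L \<psi>"
    unfolding is_prop_cumulative_def using unique_at[OF assms(1,2)] by blast
qed

end
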